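(* Let $M, N, M_{CP}$ be positive integers, $f_c>0$ a carrier frequency, $\Delta f>0$ a subcarrier spacing, $T = 1/\Delta f$, $T_{CP} = \frac{M_{CP}}{M}T$ and $T_u = \frac{M+M_{CP}}{M}T$. Let $X[n,m]\in\mathbb{C}$ for $n=0,\dots,N+1$, $m=0,\dots,M-1$, and let the transmitted baseband waveform be \[ s(t)=\frac{1}{\sqrt{M}}\sum_{n=0}^{N+1}\sum_{m=0}^{M-1}X[n,m]\,g(t-nT_u+T_{CP})\,e^{j2\pi m\Delta f(t-nT_u)}, \] where $g$ is the unit rectangular pulse of duration $T_u$ (equal to $1$ on $[0,T_u)$ and $0$ elsewhere). Define the samples $S[n,l]=s(nT_u+\frac{l}{M}T)=\frac{1}{\sqrt{M}}\sum_{m=0}^{M-1}X[n,m]e^{j2\pi ml/M}$ for $n=0,\dots,N+1$, $l=0,\dots,M-1$. Let the (noise-free) received baseband signal be \[ r(t)=\sum_{i=1}^{N_P}\beta_i\, e^{j2\pi\nu_i t}\, s\!\left(t-\Big(\tau_i-\frac{\nu_i}{f_c}t\Big)\right), \] with path gains $\beta_i\in\mathbb{C}$, delays $\tau_i$ and Doppler shifts $\nu_i$ ($i=1,\dots,N_P$). Set $k_i=\nu_i N T$, $l_i=\tau_i M\Delta f$, and $p_i = f_c/\nu_i$ (with $1/p_i:=0$ if $\nu_i=0$). Assume $l_i\geqslant 1$ and $l_i\leqslant l_{\max}$ for all $i$, where $l_{\max}=\lceil \tau_{\max} M\Delta f\rceil$ with $\tau_{\max}$ the maximum delay; assume $|p_i|>(N+2)M$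 for all $i$; and assume the CP length satisfies $l_{\max}+2\leqslant M_{CP}<M$. Define the received samples $R[n,l]=r(nT_u+\frac{l}{M}T)$. Then for all $n=0,\dots,N+1$ and $l=0,\dots,M-1$, \[ R[n,l]=\sum_{i=1}^{N_P}\sum_{l'=0}^{M-1}h^{i}_{n}[l,l']\,S[n,l'], \] where \[ h^{i}_{n}[l,l']=\beta_i\, e^{j2\pi\frac{n(M+M_{CP})+l}{M}\frac{k_i}{N}\left(1+\frac{(M-1)\Delta f}{2f_c}\right)}\, e^{j\pi\frac{M-1}{M}(l-l'-l_i)}\, \frac{\sin\!\Big(\pi\big(l-l'-l_i+\frac{n(M+M_{CP})+l}{p_i}\big)\Big)}{M\sin\!\Big(\frac{\pi}{M}\big(l-l'-l_i+\frac{n(M+M_{CP})+l}{p_i}\big)\Big)}, \] with the ratio of sines interpreted by continuity (as $M$) when its argument is a multiple of $M$... more precisely, the factor $\frac{\sin(\pi x)}{M\sin(\pi x/M)}$ is understood as its continuous extension $\frac{1}{M}\sum_{m=0}^{M-1}e^{j2\pi m x/M}e^{-j\pi\frac{M-1}{M}x}$.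
   Context: This models a CP-OFDM-based OTFS system in a multipath linear time-variant channel with the Doppler squint effect (the Doppler shift of path $i$ at baseband frequency $f$ is $\frac{\nu_i}{f_c}(f_c+f)$). The $N+2$ OFDM symbols each consist of a cyclic prefix of $M_{CP}$ samples followed by $M$ samples; sampling period is $T/M$. Noise is disregarded. *)

theory Defs
  imports Complex_Main
begin

definition rect :: "real \<Rightarrow> real \<Rightarrow> complex" where
  "rect Tu t = (if 0 \<le> t \<and> t < Tu then 1 else 0)"

definition Tsym :: "real \<Rightarrow> real" where "Tsym df = 1 / df"
definition Tcp :: "nat \<Rightarrow> nat \<Rightarrow> real \<Rightarrow> real" where
  "Tcp M Mcp df = real Mcp / real M * Tsym df"
definition Tu :: "nat \<Rightarrow> nat \<Rightarrow> real \<Rightarrow> real" where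
  "Tu M Mcp df = real (M + Mcp) / real M * Tsym df"

definition tx :: "nat \<Rightarrow> nat \<Rightarrow> nat \<Rightarrow> real \<Rightarrow> (nat \<Rightarrow> nat \<Rightarrow> complex) \<Rightarrow> real \<Rightarrow> complex" where
  "tx M N Mcp df X t =
     (1 / complex_of_real (sqrt (real M))) *
     (\<Sum>n\<le>N+1. \<Sum>m<M. X n m * rect (Tu M Mcp df) (t - real n * Tu M Mcp df + Tcp M Mcp df)
        * cis (2 * pi * real m * df * (t - real n * Tu M Mcp df)))"

definition txS :: "nat \<Rightarrow> nat \<Rightarrow> nat \<Rightarrow> real \<Rightarrow> (nat \<Rightarrow> nat \<Rightarrow> complex) \<Rightarrow> nat \<Rightarrow> nat \<Rightarrow> complex" where
  "txS M N Mcp df X n l = tx M N Mcp df X (real n * Tu M Mcp df + real l / real M * Tsym df)"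

definition rx :: "nat \<Rightarrow> nat \<Rightarrow> nat \<Rightarrow> real \<Rightarrow> real \<Rightarrow> (nat \<Rightarrow> nat \<Rightarrow> complex) \<Rightarrow> nat
    \<Rightarrow> (nat \<Rightarrow> complex) \<Rightarrow> (nat \<Rightarrow> real) \<Rightarrow> (nat \<Rightarrow> real) \<Rightarrow> real \<Rightarrow> complex" where
  "rx M N Mcp df fc X NP beta tau nu t =
     (\<Sum>i\<in>{1..NP}. beta i * cis (2 * pi * nu i * t) * tx M N Mcp df X (t - (tau i - nu i / fc * t)))"

definition rxS where
  "rxS M N Mcp df fc X NP beta tau nu n l =
     rx M N Mcp df fc X NP beta tau nu (real n * Tu M Mcp df + real l / real M * Tsym df)"

text \<open>Continuous extension of sin(pi x)/(M sin(pi x/M)):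
  (1/M) sum_{m<M} e^{j 2 pi m x/M} e^{-j pi (M-1)/M x}.\<close>
definition dirich :: "nat \<Rightarrow> real \<Rightarrow> complex" where
  "dirich M x = (1 / of_nat M) * (\<Sum>m<M. cis (2 * pi * real m * x / real M))
                 * cis (- pi * (real M - 1) / real M * x)"

definition kdop :: "nat \<Rightarrow> real \<Rightarrow> real \<Rightarrow> real" where
  "kdop N df nu = nu * real N * Tsym df"
definition ldel :: "nat \<Rightarrow> real \<Rightarrow> real \<Rightarrow> real" where
  "ldel M df tau = tau * real M * df"
definition invp :: "real \<Rightarrow> real \<Rightarrow> real" where
  "invp fc nu = nu / fc"

definition hcoef :: "nat \<Rightarrow> nat \<Rightarrow> nat \<Rightarrow> real \<Rightarrow> real \<Rightarrow> complex \<Rightarrow> real \<Rightarrow> real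
    \<Rightarrow> nat \<Rightarrow> nat \<Rightarrow> nat \<Rightarrow> complex" where
  "hcoef M N Mcp df fc b tau nu n l l' =
     (let ki = kdop N df nu; li = ldel M df tau;
          q = real (n * (M + Mcp) + l);
          x = real l - real l' - li + q * invp fc nu
      in b * cis (2 * pi * (q / real M) * (ki / real N) * (1 + (real M - 1) * df / (2 * fc)))
           * cis (pi * (real M - 1) / real M * (real l - real l' - li))
           * dirich M x)"

definition lmax :: "nat \<Rightarrow> real \<Rightarrow> nat \<Rightarrow> (nat \<Rightarrow> real) \<Rightarrow> int" where
  "lmax M df NP tau = \<lceil>Max (tau ` {1..NP}) * real M * df\<rceil>"

end

theory Submission
  imports Defs
begin

lemma dft_orth:
  assumes "m < M" "m' < M"
  shows "(\<Sum>l<M. cis (2*pi*real m*real l/real M) * cis (-(2*pi*real m'*real l/real M)))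
         = (if m = m' then of_nat M else 0)"
proof -
  define z where "z = cis (2*pi*(real m - real m')/real M)"
  have M0: "M > 0" using assms by simp
  have t: "cis (2*pi*real m*real l/real M) * cis (-(2*pi*real m'*real l/real M)) = z ^ l" for l
    unfolding z_def DeMoivre cis_mult by (rule arg_cong[where f=cis]) (simp add: field_simps diff_divide_distrib)
  show ?thesis
  proof (cases "m = m'")
    case True
    then show ?thesis by (simp add: cis_mult)
  next
    case False
    have zM: "z ^ M = 1"
    proof -
      have "z ^ M = cis (2*pi*(real_of_int (int m - int m')))"
        unfolding z_def DeMoivre using M0 by (intro arg_cong[where f=cis]) (simp add: field_simps)
      also have "\<dots> = 1" by (rule cis_multiple_2pi) simp
      finally show ?thesis .
    qed
    have z1: "z \<noteq> 1"
    proof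
      assume "z = 1"
      then have "cos (2*pi*(real m - real m')/real M) = 1" unfolding z_def
        by (metis Re_complex_of_real cis.sel(1) of_real_1)
      then obtain k :: int where k: "2*pi*(real m - real m')/real M = real_of_int k * 2 * pi"
        using cos_one_2pi_int by blast
      then have "pi * (2*(real m - real m')) = pi * (2*(k * real M))" using M0 by (simp add: field_simps)
      then have "real m - real m' = k * real M" using pi_gt_zero by (metis mult_cancel_left pi_neq_zero zero_neq_numeral)
      then have "int m - int m' = k * int M" by (metis of_int_eq_iff of_int_mult of_int_of_nat_eq of_int_diff)
      moreover have "k = 0"
      proof (rule ccontr)
        assume "k \<noteq> 0"
        then have "k \<ge> 1 \<or> k \<le> -1" by linarith
        then have "k * int M \<ge> int M \<or> k * int M \<le> - int M"
          by (metis mult_right_mono mult_1 mult_minus_left of_nat_0_le_iff)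
        then show False using \<open>int m - int m' = k * int M\<close> assms by linarith
      qed
      ultimately show False using False by simp
    qed
    show ?thesis using False by (simp add: t geometric_sum[OF z1] zM)
  qed
qed

lemma tx_sel:
  assumes M0: "M > 0" and df: "df > 0" and n: "n \<le> N+1" and y1: "- real Mcp \<le> y" and y2: "y < real M"
  shows "tx M N Mcp df X ((real (n*(M+Mcp)) + y) / (real M * df))
       = 1 / complex_of_real (sqrt (real M)) * (\<Sum>m<M. X n m * cis (2*pi*real m*y/real M))"
proof -
  define t where "t = (real (n*(M+Mcp)) + y) / (real M * df)"
  have Tu: "Tu M Mcp df = (real M + real Mcp) / (real M * df)" by (simp add: Tu_def Tsym_def)
  have r: "rect (Tu M Mcp df) (t - real n' * Tu M Mcp df + Tcp M Mcp df) = (if n' = n then 1 else 0)" for n'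
  proof -
    define A where "A = (real n - real n') * (real M + real Mcp) + y + real Mcp"
    have e: "t - real n' * Tu M Mcp df + Tcp M Mcp df = A / (real M * df)"
      unfolding A_def Tu Tcp_def Tsym_def t_def using M0 df by (simp add: field_simps)
    have pos: "real M * df > 0" using M0 df by simp
    have iff: "(0 \<le> A / (real M * df) \<and> A / (real M * df) < (real M + real Mcp) / (real M * df))
               \<longleftrightarrow> (0 \<le> A \<and> A < real M + real Mcp)"
      using pos by (smt (verit) divide_less_cancel zero_le_divide_iff)
    have "(0 \<le> A \<and> A < real M + real Mcp) \<longleftrightarrow> n' = n"
    proof (cases "n' = n")
      case True then show ?thesis using y1 y2 by (simp add: A_def)
    next
      case False
      then have "real n - real n' \<ge> 1 \<or> real n - real n' \<le> -1" by linarith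
      then have "(real n - real n') * (real M + real Mcp) \<ge> real M + real Mcp \<or>
                 (real n - real n') * (real M + real Mcp) \<le> - (real M + real Mcp)"
        by (metis add_nonneg_nonneg mult_1 mult_minus_left mult_right_mono of_nat_0_le_iff)
      then have "\<not> (0 \<le> A \<and> A < real M + real Mcp)" using y1 y2 unfolding A_def by linarith
      then show ?thesis using False by simp
    qed
    then show ?thesis unfolding rect_def e unfolding Tu iff by simp
  qed
  have c: "2 * pi * real m * df * (t - real n * Tu M Mcp df) = 2*pi*real m*y/real M" for m
    unfolding Tu t_def using M0 df by (simp add: field_simps)
  have "(\<Sum>n'\<le>N+1. \<Sum>m<M. X n' m * rect (Tu M Mcp df) (t - real n' * Tu M Mcp df + Tcp M Mcp df)
        * cis (2 * pi * real m * df * (t - real n' * Tu M Mcp df)))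
      = (\<Sum>n'\<le>N+1. if n' = n then (\<Sum>m<M. X n m * cis (2*pi*real m*y/real M)) else 0)"
    by (rule sum.cong) (auto simp: r c)
  also have "\<dots> = (\<Sum>m<M. X n m * cis (2*pi*real m*y/real M))" using n by simp
  finally have S: "(\<Sum>n'\<le>N+1. \<Sum>m<M. X n' m * rect (Tu M Mcp df) (t - real n' * Tu M Mcp df + Tcp M Mcp df)
        * cis (2 * pi * real m * df * (t - real n' * Tu M Mcp df))) = (\<Sum>m<M. X n m * cis (2*pi*real m*y/real M))" .
  show ?thesis unfolding tx_def t_def[symmetric] S ..
qed

lemma alg:
  fixes K C :: complex and E Xm :: "nat \<Rightarrow> complex"
  assumes M0: "M > 0"
  shows "(\<Sum>l<M. (K * (1 / of_nat M) * (\<Sum>m'<M. E m' * cis (-(2*pi*real m'*real l/real M))))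
             * (C * (\<Sum>m<M. Xm m * cis (2*pi*real m*real l/real M))))
         = K * C * (\<Sum>m<M. Xm m * E m)"
proof -
  define c where "c = (\<lambda>m l. cis (2*pi*real m*real l/real M))"
  define d where "d = (\<lambda>m' l. cis (-(2*pi*real m'*real l/real M)))"
  define k0 where "k0 = K * (1 / of_nat M) * C"
  have step1: "(K * (1 / of_nat M) * (\<Sum>m'<M. E m' * d m' l)) * (C * (\<Sum>m<M. Xm m * c m l))
      = (\<Sum>m'<M. \<Sum>m<M. k0 * (E m' * Xm m) * (c m l * d m' l))" for l
  proof -
    have "(K * (1 / of_nat M) * (\<Sum>m'<M. E m' * d m' l)) * (C * (\<Sum>m<M. Xm m * c m l))
       = k0 * ((\<Sum>m'<M. E m' * d m' l) * (\<Sum>m<M. Xm m * c m l))"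
      unfolding k0_def by (simp only: mult_ac)
    also have "\<dots> = k0 * (\<Sum>m'<M. \<Sum>m<M. E m' * d m' l * (Xm m * c m l))"
      by (simp only: sum_product)
    also have "\<dots> = (\<Sum>m'<M. \<Sum>m<M. k0 * (E m' * Xm m) * (c m l * d m' l))"
      by (simp only: sum_distrib_left mult_ac)
    finally show ?thesis .
  qed
  have "(\<Sum>l<M. (K * (1 / of_nat M) * (\<Sum>m'<M. E m' * d m' l)) * (C * (\<Sum>m<M. Xm m * c m l)))
      = (\<Sum>l<M. \<Sum>m'<M. \<Sum>m<M. k0 * (E m' * Xm m) * (c m l * d m' l))"
    by (simp only: step1)
  also have "\<dots> = (\<Sum>m'<M. \<Sum>l<M. \<Sum>m<M. k0 * (E m' * Xm m) * (c m l * d m' l))"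
    by (rule sum.swap)
  also have "\<dots> = (\<Sum>m'<M. \<Sum>m<M. \<Sum>l<M. k0 * (E m' * Xm m) * (c m l * d m' l))"
    by (rule sum.cong[OF refl], rule sum.swap)
  also have "\<dots> = (\<Sum>m'<M. \<Sum>m<M. k0 * (E m' * Xm m) * (\<Sum>l<M. c m l * d m' l))"
    by (simp only: sum_distrib_left)
  also have "\<dots> = (\<Sum>m'<M. \<Sum>m<M. k0 * (E m' * Xm m) * (if m = m' then of_nat M else 0))"
    unfolding c_def d_def by (intro sum.cong refl) (simp add: dft_orth)
  also have "\<dots> = (\<Sum>m'<M. k0 * (E m' * Xm m') * of_nat M)"
    by (intro sum.cong refl) (simp add: if_distrib cong: if_cong)
  also have "\<dots> = (\<Sum>m'<M. K * C * (Xm m' * E m'))"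
    unfolding k0_def using M0 by (intro sum.cong refl) (simp add: field_simps)
  also have "\<dots> = K * C * (\<Sum>m<M. Xm m * E m)" by (simp add: sum_distrib_left)
  finally show ?thesis unfolding c_def d_def .
qed

lemma hcoef_simp:
  assumes M0: "M > 0" and N0: "N > 0" and df: "df > 0" and fc: "fc > 0"
  shows "hcoef M N Mcp df fc b tau nu n l l' =
     b * cis (2*pi*nu*(real (n*(M+Mcp)+l) / (real M * df))) * (1 / of_nat M) *
     (\<Sum>m<M. cis (2*pi*real m*(real l - ldel M df tau + real (n*(M+Mcp)+l) * invp fc nu)/real M)
             * cis (-(2*pi*real m*real l'/real M)))"
proof -
  define q where "q = real (n*(M+Mcp)+l)"
  define x where "x = real l - real l' - ldel M df tau + q * invp fc nu"
  define x0 where "x0 = real l - ldel M df tau + q * invp fc nu"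
  have ph: "cis (2 * pi * (q / real M) * (kdop N df nu / real N) * (1 + (real M - 1) * df / (2 * fc)))
           * cis (pi * (real M - 1) / real M * (real l - real l' - ldel M df tau))
           * cis (- pi * (real M - 1) / real M * x)
         = cis (2*pi*nu*(q / (real M * df)))"
    unfolding cis_mult x_def kdop_def ldel_def invp_def Tsym_def
    using M0 N0 df fc by (intro arg_cong[where f=cis]) (simp add: field_simps)
  have sm: "(\<Sum>m<M. cis (2 * pi * real m * x / real M)) =
     (\<Sum>m<M. cis (2*pi*real m*x0/real M) * cis (-(2*pi*real m*real l'/real M)))"
    unfolding cis_mult x_def x0_def
    using M0 by (intro sum.cong refl arg_cong[where f=cis]) (simp add: field_simps)
  have "hcoef M N Mcp df fc b tau nu n l l' =
      b * (cis (2 * pi * (q / real M) * (kdop N df nu / real N) * (1 + (real M - 1) * df / (2 * fc)))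
           * cis (pi * (real M - 1) / real M * (real l - real l' - ldel M df tau))
           * cis (- pi * (real M - 1) / real M * x)) * (1 / of_nat M) * (\<Sum>m<M. cis (2 * pi * real m * x / real M))"
    unfolding hcoef_def dirich_def Let_def q_def[symmetric] x_def[symmetric] by (simp add: mult_ac)
  also have "\<dots> = b * cis (2*pi*nu*(q / (real M * df))) * (1 / of_nat M) *
     (\<Sum>m<M. cis (2*pi*real m*x0/real M) * cis (-(2*pi*real m*real l'/real M)))"
    unfolding ph sm ..
  finally show ?thesis unfolding q_def x0_def .
qed

theorem theorem1:
  fixes M N Mcp NP :: nat and fc df :: real
    and X :: "nat \<Rightarrow> nat \<Rightarrow> complex"
    and beta :: "nat \<Rightarrow> complex" and tau nu :: "nat \<Rightarrow> real"
  assumes "M > 0" and "N > 0" and "Mcp > 0" and "fc > 0" and "df > 0"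
    and "\<forall>i\<in>{1..NP}. ldel M df (tau i) \<ge> 1 \<and> ldel M df (tau i) \<le> real_of_int (lmax M df NP tau)"
    and "\<forall>i\<in>{1..NP}. nu i = 0 \<or> \<bar>fc / nu i\<bar> > real ((N + 2) * M)"
    and "lmax M df NP tau + 2 \<le> int Mcp" and "Mcp < M"
  shows "\<forall>n\<le>N+1. \<forall>l<M.
           rxS M N Mcp df fc X NP beta tau nu n l =
           (\<Sum>i\<in>{1..NP}. \<Sum>l'<M. hcoef M N Mcp df fc (beta i) (tau i) (nu i) n l l' * txS M N Mcp df X n l')"
proof (intro allI impI)
  fix n l assume n: "n \<le> N+1" and l: "l < M"
  note M0 = assms(1) and N0 = assms(2) and fc = assms(4) and df = assms(5)
  define q where "q = real (n*(M+Mcp)+l)"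
  define t0 where "t0 = real n * Tu M Mcp df + real l / real M * Tsym df"
  have t0: "t0 = q / (real M * df)"
    unfolding t0_def q_def Tu_def Tsym_def using M0 df by (simp add: field_simps)
  have q0: "q \<ge> 0" unfolding q_def by simp
  have qlt: "q < 2 * (real (N+2) * real M)"
  proof -
    have "n*(M+Mcp)+l \<le> (N+1)*(M+Mcp) + l" using n by (intro add_right_mono mult_right_mono) auto
    also have "\<dots> < (N+1)*(2*M) + M" using l assms(9) by (intro add_le_less_mono mult_left_mono) auto
    also have "\<dots> \<le> 2 * ((N+2)*M)" by simp
    finally have "n*(M+Mcp)+l < 2 * ((N+2)*M)" .
    then show ?thesis unfolding q_def by (metis of_nat_less_iff of_nat_mult of_nat_numeral)
  qed
  have per: "beta i * cis (2 * pi * nu i * t0) * tx M N Mcp df X (t0 - (tau i - nu i / fc * t0))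
     = (\<Sum>l'<M. hcoef M N Mcp df fc (beta i) (tau i) (nu i) n l l' * txS M N Mcp df X n l')"
    if i: "i \<in> {1..NP}" for i
  proof -
    define a where "a = invp fc (nu i)"
    define li where "li = ldel M df (tau i)"
    define y where "y = real l - li + q * a"
    have qa: "\<bar>q * a\<bar> < 2"
    proof (cases "nu i = 0")
      case True then show ?thesis by (simp add: a_def invp_def)
    next
      case False
      then have big: "\<bar>fc / nu i\<bar> > real ((N + 2) * M)" using assms(7) i by auto
      have "\<bar>a\<bar> * \<bar>fc / nu i\<bar> = 1" unfolding a_def invp_def using False fc by (simp add: abs_mult[symmetric])
      then have a1: "\<bar>a\<bar> * (real (N+2) * real M) < 1 \<or> a = 0" using big
        by (metis abs_ge_zero abs_not_less_zero mult_less_cancel_left_pos mult.right_neutral of_nat_mult abs_eq_0 less_eq_real_def)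
      show ?thesis
      proof (cases "a = 0")
        case True then show ?thesis by simp
      next
        case False
        then have a1: "\<bar>a\<bar> * (real (N+2) * real M) < 1" using a1 by simp
        have "\<bar>q * a\<bar> = q * \<bar>a\<bar>" using q0 by (simp add: abs_mult)
        also have "\<dots> \<le> 2 * (real (N+2) * real M) * \<bar>a\<bar>" using qlt by (intro mult_right_mono) auto
        also have "\<dots> = 2 * (\<bar>a\<bar> * (real (N+2) * real M))" by (simp add: algebra_simps)
        also have "\<dots> < 2" using a1 by linarith
        finally show ?thesis .
      qed
    qed
    have li: "1 \<le> li \<and> li \<le> real_of_int (lmax M df NP tau)" using assms(6) i unfolding li_def by blast
    have "real_of_int (lmax M df NP tau) + 2 \<le> real Mcp" using assms(8)
      by (metis of_int_le_iff of_int_add of_int_numeral of_int_of_nat_eq)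
    then have li1: "li \<ge> 1" and li2: "li \<le> real Mcp - 2" using li by linarith+
    have y1: "- real Mcp \<le> y" using qa li2 unfolding y_def by linarith
    have y2: "y < real M" using qa li1 l unfolding y_def by linarith
    have arg: "t0 - (tau i - nu i / fc * t0) = (real (n*(M+Mcp)) + y) / (real M * df)"
      unfolding t0 y_def li_def a_def ldel_def invp_def q_def using M0 df fc by (simp add: field_simps)
    have lhs: "tx M N Mcp df X (t0 - (tau i - nu i / fc * t0))
        = 1 / complex_of_real (sqrt (real M)) * (\<Sum>m<M. X n m * cis (2*pi*real m*y/real M))"
      unfolding arg by (rule tx_sel[OF M0 df n y1 y2])
    have S: "txS M N Mcp df X n l' = 1 / complex_of_real (sqrt (real M)) * (\<Sum>m<M. X n m * cis (2*pi*real m*real l'/real M))"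
      if "l' < M" for l'
    proof -
      have "real n * Tu M Mcp df + real l' / real M * Tsym df = (real (n*(M+Mcp)) + real l') / (real M * df)"
        unfolding Tu_def Tsym_def using M0 df by (simp add: field_simps)
      then show ?thesis unfolding txS_def using tx_sel[OF M0 df n, where y = "real l'"] that by simp
    qed
    have H: "hcoef M N Mcp df fc (beta i) (tau i) (nu i) n l l' =
      beta i * cis (2*pi*nu i*t0) * (1 / of_nat M) *
      (\<Sum>m<M. cis (2*pi*real m*y/real M) * cis (-(2*pi*real m*real l'/real M)))" for l'
      unfolding hcoef_simp[OF M0 N0 df fc] t0 q_def y_def li_def a_def ..
    have "(\<Sum>l'<M. hcoef M N Mcp df fc (beta i) (tau i) (nu i) n l l' * txS M N Mcp df X n l')
      = (\<Sum>l'<M. (beta i * cis (2*pi*nu i*t0) * (1 / of_nat M) *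
      (\<Sum>m<M. cis (2*pi*real m*y/real M) * cis (-(2*pi*real m*real l'/real M))))
       * (1 / complex_of_real (sqrt (real M)) * (\<Sum>m<M. X n m * cis (2*pi*real m*real l'/real M))))"
      by (intro sum.cong refl) (simp only: H S lessThan_iff)
    also have "\<dots> = beta i * cis (2*pi*nu i*t0) * (1 / complex_of_real (sqrt (real M))) *
        (\<Sum>m<M. X n m * cis (2*pi*real m*y/real M))"
      by (rule alg[OF M0, where E = "\<lambda>m. cis (2*pi*real m*y/real M)" and Xm = "X n"])
    finally show ?thesis unfolding lhs by (simp add: mult_ac)
  qed
  show "rxS M N Mcp df fc X NP beta tau nu n l =
           (\<Sum>i\<in>{1..NP}. \<Sum>l'<M. hcoef M N Mcp df fc (beta i) (tau i) (nu i) n l l' * txS M N Mcp df X n l')"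
    unfolding rxS_def rx_def t0_def[symmetric] by (rule sum.cong[OF refl]) (rule per)
qed

end
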